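(* Let $n\ge1$ be an integer and let $\varepsilon,\alpha,C_0,z_0$ be complex constants with $\alpha\neq0$. Then the rational function $$y(z)=\frac{C_0}{\alpha}+\frac{2(-1)^{n-1}(2n-1)!\,\varepsilon}{\alpha\,(n-1)!\,(z+z_0)^n}$$ is a solution of the ordinary differential equation $$\varepsilon\frac{d^ny}{dz^n}+\frac{\alpha}{2}y^2-C_0y+\frac{C_0^2}{2\alpha}=0 .$$ *)

theory Defs
  imports "HOL-Analysis.Analysis"
begin

end

theory Submission
  imports Defs
begin

lemma deriv_pow_term:
  fixes c z0 z :: complex and m :: nat
  assumes "z + z0 \<noteq> 0"
  shows "((\<lambda>z. c / (z + z0) ^ m) has_field_derivative (- of_nat m * c / (z + z0) ^ (m + 1))) (at z)"
proof -
  have "((\<lambda>z. c / (z + z0) ^ m) has_field_derivative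
        (- (c * (of_nat m * (z + z0) ^ (m - 1) * 1)) / ((z + z0) ^ m * (z + z0) ^ m))) (at z)"
    using assms by (auto intro!: derivative_eq_intros)
  moreover have "- (c * (of_nat m * (z + z0) ^ (m - 1) * 1)) / ((z + z0) ^ m * (z + z0) ^ m)
       = - of_nat m * c / (z + z0) ^ (m + 1)"
  proof (cases m)
    case 0 then show ?thesis by simp
  next
    case (Suc k)
    have w: "z + z0 \<noteq> 0" by fact
    define w where "w = z + z0"
    have "w \<noteq> 0" using w w_def by simp
    then have "- (c * (of_nat m * w ^ (m - 1) * 1)) / (w ^ m * w ^ m) = - of_nat m * c / w ^ (m + 1)"
      using Suc by (simp add: divide_simps) (simp add: algebra_simps)
    then show ?thesis by (simp add: w_def)
  qed
  ultimately show ?thesis by simp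
qed

lemma iter_deriv:
  fixes c A z0 :: complex and n :: nat and y :: "complex \<Rightarrow> complex"
  assumes y_def: "y = (\<lambda>z. c + A / (z + z0) ^ n)"
  shows "\<forall>z. z + z0 \<noteq> 0 \<longrightarrow> (deriv ^^ k) y z =
     (if k = 0 then c else 0) + A * (-1) ^ k * pochhammer (of_nat n) k / (z + z0) ^ (n + k)"
proof (induction k)
  case 0
  then show ?case by (simp add: y_def)
next
  case (Suc k)
  show ?case
  proof (intro allI impI)
    fix z assume z: "z + z0 \<noteq> 0"
    let ?f = "\<lambda>z. (if k = 0 then c else 0) + A * (-1) ^ k * pochhammer (of_nat n) k / (z + z0) ^ (n + k)"
    have op: "open (UNIV - {-z0})" by auto
    have ev: "eventually (\<lambda>w. w \<in> UNIV - {-z0}) (nhds z)"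
      using z by (intro eventually_nhds_in_open[OF op]) (auto simp: add_eq_0_iff)
    have ev2: "eventually (\<lambda>w. (deriv ^^ k) y w = ?f w) (nhds z)"
      by (rule eventually_mono[OF ev]) (use Suc.IH in \<open>auto simp: add_eq_0_iff\<close>)
    have "(deriv ^^ Suc k) y z = deriv ((deriv ^^ k) y) z" by simp
    also have "\<dots> = deriv ?f z" by (rule deriv_cong_ev[OF ev2 refl])
    also have "\<dots> = - of_nat (n + k) * (A * (-1) ^ k * pochhammer (of_nat n) k) / (z + z0) ^ (n + k + 1)"
      using DERIV_add[OF DERIV_const deriv_pow_term[OF z, of "A * (-1) ^ k * pochhammer (of_nat n) k" "n + k"],
          of "if k = 0 then c else 0"]
      by (intro DERIV_imp_deriv) simp
    also have "\<dots> = (if Suc k = 0 then c else 0) + A * (-1) ^ Suc k * pochhammer (of_nat n) (Suc k) / (z + z0) ^ (n + Suc k)"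
      by (simp add: pochhammer_rec' field_simps)
    finally show "(deriv ^^ Suc k) y z = (if Suc k = 0 then c else 0) + A * (-1) ^ Suc k * pochhammer (of_nat n) (Suc k) / (z + z0) ^ (n + Suc k)" .
  qed
qed

lemma poch_fact:
  "pochhammer (of_nat (Suc j) :: complex) k * of_nat (fact j) = of_nat (fact (j + k))"
proof (induction k)
  case 0 then show ?case by simp
next
  case (Suc k)
  have "pochhammer (of_nat (Suc j) :: complex) (Suc k) * of_nat (fact j)
      = (of_nat (Suc j) + of_nat k) * (pochhammer (of_nat (Suc j)) k * of_nat (fact j))"
    by (simp add: pochhammer_rec' algebra_simps)
  also have "\<dots> = of_nat (Suc (j + k)) * of_nat (fact (j + k))" using Suc by simp
  also have "\<dots> = of_nat (fact (j + Suc k))" by (simp add: algebra_simps)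
  finally show ?case .
qed

theorem mainTheorem5:
  fixes n :: nat and \<epsilon> \<alpha> C\<^sub>0 z\<^sub>0 :: complex and y :: "complex \<Rightarrow> complex"
  assumes "n \<ge> 1" and "\<alpha> \<noteq> 0"
    and y_def: "y = (\<lambda>z. C\<^sub>0 / \<alpha> + 2 * (-1) ^ (n - 1) * of_nat (fact (2 * n - 1)) * \<epsilon>
                      / (\<alpha> * of_nat (fact (n - 1)) * (z + z\<^sub>0) ^ n))"
  shows "\<forall>z. z + z\<^sub>0 \<noteq> 0 \<longrightarrow>
           \<epsilon> * (deriv ^^ n) y z + \<alpha> / 2 * (y z)\<^sup>2 - C\<^sub>0 * y z + C\<^sub>0\<^sup>2 / (2 * \<alpha>) = 0"
proof (intro allI impI)
  fix z assume z: "z + z\<^sub>0 \<noteq> 0"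
  define A where "A = 2 * (-1) ^ (n - 1) * of_nat (fact (2 * n - 1)) * \<epsilon> / (\<alpha> * of_nat (fact (n - 1)))"
  have y2: "y = (\<lambda>z. C\<^sub>0 / \<alpha> + A / (z + z\<^sub>0) ^ n)"
    unfolding y_def A_def by (auto simp: field_simps)
  have D: "(deriv ^^ n) y z = A * (-1) ^ n * pochhammer (of_nat n) n / (z + z\<^sub>0) ^ (n + n)"
    using iter_deriv[OF y2, rule_format, OF z, of n] assms(1) by simp
  have P: "pochhammer (of_nat n :: complex) n = of_nat (fact (2 * n - 1)) / of_nat (fact (n - 1))"
  proof -
    obtain j where j: "n = Suc j" using assms(1) by (cases n) auto
    have "2 * n - 1 = j + n" using j by simp
    moreover have "n - 1 = j" using j by simp
    ultimately have e: "pochhammer (of_nat n :: complex) n * of_nat (fact (n - 1)) = of_nat (fact (2 * n - 1))"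
      using poch_fact[of j n] by (simp only: j[symmetric])
    have "(of_nat (fact (n - 1)) :: complex) \<noteq> 0" by simp
    then show ?thesis using e by (simp add: eq_divide_eq)
  qed
  have sgn: "(-1 :: complex) ^ n = - ((-1) ^ (n - 1))"
    using assms(1) by (cases n) auto
  define F where "F = (of_nat (fact (2 * n - 1)) :: complex)"
  define G where "G = (of_nat (fact (n - 1)) :: complex)"
  define W where "W = (z + z\<^sub>0) ^ n"
  have W0: "W \<noteq> 0" using z by (simp add: W_def)
  have G0: "G \<noteq> 0" by (simp add: G_def)
  have yz: "y z = C\<^sub>0 / \<alpha> + A / W" by (simp add: y2 W_def)
  have D2: "(deriv ^^ n) y z = A * (-1) ^ n * F / G / (W * W)"
    using D P by (simp add: W_def F_def G_def power_add)
  have A2: "A = 2 * (-1) ^ (n - 1) * F * \<epsilon> / (\<alpha> * G)" by (simp add: A_def F_def G_def)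
  show "\<epsilon> * (deriv ^^ n) y z + \<alpha> / 2 * (y z)\<^sup>2 - C\<^sub>0 * y z + C\<^sub>0\<^sup>2 / (2 * \<alpha>) = 0"
    unfolding D2 yz A2 sgn using W0 G0 assms(2)
    by (simp add: field_simps power2_eq_square)
qed

end
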